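(* Let $\mathcal{X}$ be a compact metric space and $k:\mathcal{X}^2\to\mathbb{R}$ a continuous, universal kernel with $\sup_{x\in\mathcal{X}}\sqrt{k(x,x)}\le K<\infty$, with RKHS $\mathcal{H}$. Let $P$ be a probability distribution on $\mathcal{X}\times\{+1,-1\}$ such that for some $\varepsilon>0$, $P(\{x:\varepsilon\le P(+1|x)\le 1-\varepsilon\})>0$. Let $\ell:\mathbb{R}\to\mathbb{R}$ be non-decreasing, convex and non-negative with the property that for every $M>0$ there is $z_0$ such that $g\ge M$ for all $z\ge z_0$ and all $g\in\partial\ell(z)$. For measurable $f$ and $\rho\in\mathbb{R}$ let $\mathcal{R}(f,\rho)=-2\rho+\mathbb{E}_P[\ell(\rho-yf(x))]$, $\mathcal{R}^*=\inf\{\mathcal{R}(f,\rho):f\in L_0(\mathcal{X}),\rho\in\mathbb{R}\}$, and for $\lambda>0$, $\mathcal{R}_\lambda(f,\rho)=\mathcal{R}(f,\rho)+\theta(\|f\|_{\mathcal{H}}^2\le\lambda^2)$, where $\theta(A)=0$ if $A$ is true and $\infty$ otherwise. Then $$\lim_{\lambda\to\infty}\inf\{\mathcal{R}_\lambda(f,\rho):f\in\mathcal{H},\rho\in\mathbb{R}\}=\mathcal{R}^*.$$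
   Context: A kernel is universal if its RKHS is dense in the continuous functions on $\mathcal{X}$ in supremum norm. $L_0(\mathcal{X})$ is the set of measurable functions on $\mathcal{X}$; $\partial\ell$ is the subdifferential. *)

theory Defs
  imports "HOL-Probability.Probability"
begin

definition is_kernel :: "('a \<Rightarrow> 'a \<Rightarrow> real) \<Rightarrow> bool" where
  "is_kernel k \<longleftrightarrow> (\<forall>x y. k x y = k y x) \<and>
     (\<forall>n (c::nat \<Rightarrow> real) (xs::nat \<Rightarrow> 'a).
        (\<Sum>i<n. \<Sum>j<n. c i * c j * k (xs i) (xs j)) \<ge> 0)"

definition is_RKHS :: "('a \<Rightarrow> 'a \<Rightarrow> real) \<Rightarrow> ('a \<Rightarrow> real) set
    \<Rightarrow> (('a \<Rightarrow> real) \<Rightarrow> ('a \<Rightarrow> real) \<Rightarrow> real) \<Rightarrow> bool" where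
  "is_RKHS k H ip \<longleftrightarrow>
     (\<lambda>x. 0) \<in> H \<and>
     (\<forall>f\<in>H. \<forall>g\<in>H. (\<lambda>x. f x + g x) \<in> H) \<and>
     (\<forall>c. \<forall>f\<in>H. (\<lambda>x. c * f x) \<in> H) \<and>
     (\<forall>f\<in>H. \<forall>g\<in>H. ip f g = ip g f) \<and>
     (\<forall>f\<in>H. \<forall>g\<in>H. \<forall>h\<in>H. ip (\<lambda>x. f x + g x) h = ip f h + ip g h) \<and>
     (\<forall>c. \<forall>f\<in>H. \<forall>g\<in>H. ip (\<lambda>x. c * f x) g = c * ip f g) \<and>
     (\<forall>f\<in>H. ip f f \<ge> 0) \<and>
     (\<forall>f\<in>H. ip f f = 0 \<longrightarrow> f = (\<lambda>x. 0)) \<and>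
     (\<forall>F. (\<forall>n. F n \<in> H) \<and>
          (\<forall>e>0. \<exists>N. \<forall>m\<ge>N. \<forall>n\<ge>N.
              ip (\<lambda>x. F m x - F n x) (\<lambda>x. F m x - F n x) < e)
        \<longrightarrow> (\<exists>f\<in>H. (\<lambda>n. ip (\<lambda>x. F n x - f x) (\<lambda>x. F n x - f x)) \<longlonglongrightarrow> 0)) \<and>
     (\<forall>x. (\<lambda>y. k x y) \<in> H) \<and>
     (\<forall>f\<in>H. \<forall>x. f x = ip f (\<lambda>y. k x y))"

definition universal_RKHS :: "('a::topological_space \<Rightarrow> real) set \<Rightarrow> bool" where
  "universal_RKHS H \<longleftrightarrow>
     (\<forall>g. continuous_on UNIV g \<longrightarrow> (\<forall>e>0. \<exists>f\<in>H. \<forall>x. \<bar>f x - g x\<bar> \<le> e))"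

definition subdiff :: "(real \<Rightarrow> real) \<Rightarrow> real \<Rightarrow> real set" where
  "subdiff l z = {g. \<forall>w. l w \<ge> l z + g * (w - z)}"

definition lab :: "bool \<Rightarrow> real" where
  "lab b = (if b then 1 else -1)"

definition risk :: "('a \<times> bool) measure \<Rightarrow> (real \<Rightarrow> real) \<Rightarrow> ('a \<Rightarrow> real) \<Rightarrow> real \<Rightarrow> ereal" where
  "risk P l f \<rho> = ereal (-2 * \<rho>) +
     enn2ereal (\<integral>\<^sup>+ z. ennreal (l (\<rho> - lab (snd z) * f (fst z))) \<partial>P)"

definition theta :: "bool \<Rightarrow> ereal" where
  "theta A = (if A then 0 else \<infinity>)"

definition reg_risk :: "('a \<times> bool) measure \<Rightarrow> (real \<Rightarrow> real)
    \<Rightarrow> (('a \<Rightarrow> real) \<Rightarrow> ('a \<Rightarrow> real) \<Rightarrow> real) \<Rightarrow> real \<Rightarrow> ('a \<Rightarrow> real) \<Rightarrow> real \<Rightarrow> ereal" where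
  "reg_risk P l ip lam f \<rho> = risk P l f \<rho> + theta (ip f f \<le> lam\<^sup>2)"

end

theory Submission
  imports Defs
begin


lemma ury:
  fixes F U :: "'a::metric_space set"
  assumes "closed F" "open U" "F \<subseteq> U"
  obtains g :: "'a \<Rightarrow> real" where "continuous_on UNIV g" "\<And>x. 0 \<le> g x \<and> g x \<le> 1"
    "\<And>x. x \<in> F \<Longrightarrow> g x = 1" "\<And>x. x \<notin> U \<Longrightarrow> g x = 0"
proof -
  have n: "normal_space (euclidean :: 'a topology)"
    by (simp add: metrizable_imp_normal_space metrizable_space_euclidean)
  have c1: "closedin euclidean (-U)" using assms(2) by (simp add: closed_Compl)
  have c2: "closedin euclidean F" using assms(1) by simp
  have dj: "disjnt (-U) F" using assms(3) by (auto simp: disjnt_def)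
  obtain f where f: "continuous_map euclidean (top_of_set {0..1::real}) f" "f ` (-U) \<subseteq> {0}" "f ` F \<subseteq> {1}"
    using Urysohn_lemma[OF n c1 c2 dj zero_le_one] by blast
  have cm: "continuous_map euclidean euclidean f \<and> f \<in> topspace euclidean \<rightarrow> {0..1::real}"
    using continuous_map_in_subtopology[THEN iffD1, OF f(1)] by simp
  have h1: "continuous_on UNIV f"
    using cm continuous_map_iff_continuous2 by simp
  have h2: "\<And>x. 0 \<le> f x \<and> f x \<le> 1"
  proof -
    fix x have "f x \<in> {0..1}" using cm by (simp add: Pi_iff)
    then show "0 \<le> f x \<and> f x \<le> 1" by simp
  qed
  have h3: "\<And>x. x \<in> F \<Longrightarrow> f x = 1" using f(3) by auto
  have h4: "\<And>x. x \<notin> U \<Longrightarrow> f x = 0" using f(2) by auto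
  show ?thesis by (rule that[of f]) (simp_all add: h1 h2 h3 h4)
qed


definition regset :: "'a::metric_space measure \<Rightarrow> 'a set \<Rightarrow> bool" where
  "regset M A \<longleftrightarrow> (\<forall>d>0. \<exists>F U. closed F \<and> open U \<and> F \<subseteq> A \<and> A \<subseteq> U \<and> measure M (U - F) < d)"

lemma regset_open:
  fixes M :: "'a::metric_space measure"
  assumes fm: "finite_measure M" and s: "sets M = sets borel" and A: "open A"
  shows "regset M A"
proof (cases "A = UNIV")
  case True then show ?thesis unfolding regset_def
    by (intro allI impI exI[of _ UNIV] exI[of _ UNIV]) auto
next
  case False
  interpret finite_measure M by fact
  define F where "F n = {x. infdist x (-A) \<ge> 1 / (Suc n)}" for n
  have cF: "closed (F n)" for n
    unfolding F_def by (intro closed_Collect_le continuous_intros) auto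
  have FA: "F n \<subseteq> A" for n
  proof
    fix x assume "x \<in> F n"
    then have "infdist x (-A) > 0"
    proof -
      have "1 / real (Suc n) > 0" by simp
      moreover have "1 / real (Suc n) \<le> infdist x (-A)" using \<open>x \<in> F n\<close> unfolding F_def by simp
      ultimately show ?thesis by linarith
    qed
    then show "x \<in> A" using infdist_zero[of x "-A"] by (metis Compl_iff less_irrefl)
  qed
  have UF: "(\<Union>n. F n) = A"
  proof
    show "(\<Union>n. F n) \<subseteq> A" using FA by blast
    show "A \<subseteq> (\<Union>n. F n)"
    proof
      fix x assume "x \<in> A"
      have "infdist x (-A) > 0"
      proof -
        have "-A \<noteq> {}" using False by auto
        then have "infdist x (-A) \<noteq> 0"
          using in_closed_iff_infdist_zero[of "-A" x] A \<open>x \<in> A\<close> by auto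
        then show ?thesis using infdist_nonneg[of x "-A"] by linarith
      qed
      then obtain n where "1 / real (Suc n) < infdist x (-A)"
        using nat_approx_posE by blast
      then show "x \<in> (\<Union>n. F n)" unfolding F_def by (auto intro!: exI[of _ n])
    qed
  qed
  have inc: "incseq F"
  proof (rule incseq_SucI, rule subsetI)
    fix n x assume "x \<in> F n"
    then have "1 / real (Suc n) \<le> infdist x (-A)" unfolding F_def by auto
    moreover have "1 / real (Suc (Suc n)) \<le> 1 / real (Suc n)"
      by (intro divide_left_mono) auto
    ultimately show "x \<in> F (Suc n)" unfolding F_def by auto
  qed
  have sF: "F n \<in> sets M" for n using cF s by auto
  have "(\<lambda>n. measure M (F n)) \<longlonglongrightarrow> measure M A"
    using finite_Lim_measure_incseq[of F] inc sF UF by auto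
  show ?thesis unfolding regset_def
  proof (intro allI impI)
    fix d :: real assume "d > 0"
    obtain n where "\<bar>measure M (F n) - measure M A\<bar> < d"
      using LIMSEQ_D[OF \<open>(\<lambda>n. measure M (F n)) \<longlonglongrightarrow> measure M A\<close> \<open>d > 0\<close>]
      by (auto simp: dist_real_def)
    moreover have "measure M (A - F n) = measure M A - measure M (F n)"
      using FA sF s A by (intro finite_measure_Diff) auto
    ultimately show "\<exists>F U. closed F \<and> open U \<and> F \<subseteq> A \<and> A \<subseteq> U \<and> measure M (U - F) < d"
      using cF FA A by (intro exI[of _ "F n"] exI[of _ A]) auto
  qed
qed


lemma regset_compl:
  fixes M :: "'a::metric_space measure"
  assumes "regset M a"
  shows "regset M (-a)"
  unfolding regset_def
proof (intro allI impI)
  fix d :: real assume "d > 0"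
  have "\<exists>F U. closed F \<and> open U \<and> F \<subseteq> a \<and> a \<subseteq> U \<and> measure M (U - F) < d"
    using assms \<open>d > 0\<close> unfolding regset_def by simp
  then obtain F U where FU: "closed F" "open U" "F \<subseteq> a" "a \<subseteq> U" "measure M (U - F) < d"
    by auto
  have eq: "(-F) - (-U) = U - F" by auto
  have 1: "closed (-U)" using FU(2) by (simp add: closed_Compl)
  have 2: "open (-F)" using FU(1) by (simp add: open_Compl)
  have 3: "-U \<subseteq> -a" using FU(4) by auto
  have 4: "-a \<subseteq> -F" using FU(3) by auto
  have 5: "measure M ((-F) - (-U)) < d" unfolding eq by (rule FU(5))
  show "\<exists>F' U'. closed F' \<and> open U' \<and> F' \<subseteq> -a \<and> -a \<subseteq> U' \<and> measure M (U' - F') < d"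
    using 1 2 3 4 5 by blast
qed

lemma regset_borel:
  fixes M :: "'a::metric_space measure"
  assumes fm: "finite_measure M" and s: "sets M = sets borel" and A: "A \<in> sets borel"
  shows "regset M A"
proof -
  interpret finite_measure M by fact
  have "A \<in> sigma_sets UNIV {S. open S}" using A unfolding sets_borel .
  then show ?thesis
  proof induction
    case (Basic a) then show ?case using regset_open[OF fm s, of a] by simp
  next
    case Empty show ?case using regset_open[OF fm s, of "{}"] by simp
  next
    case (Compl a)
    then show ?case using regset_compl[of M a] by (simp add: Compl_eq_Diff_UNIV)
  next
    case (Union a)
    have aS: "a i \<in> sets M" for i using Union.hyps s by (simp add: sets_borel)
    show ?case unfolding regset_def
    proof (intro allI impI)
      fix d :: real assume "d > 0"
      define e where "e i = d / 2 * (1/2) ^ Suc i" for i :: nat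
      have epos: "e i > 0" for i using \<open>d > 0\<close> by (simp add: e_def)
      have "\<exists>FU. closed (fst FU) \<and> open (snd FU) \<and> fst FU \<subseteq> a i \<and> a i \<subseteq> snd FU \<and> measure M (snd FU - fst FU) < e i" for i
      proof -
        have "\<exists>F U. closed F \<and> open U \<and> F \<subseteq> a i \<and> a i \<subseteq> U \<and> measure M (U - F) < e i"
          using Union.IH[of i] epos[of i] unfolding regset_def by simp
        then obtain F U where "closed F \<and> open U \<and> F \<subseteq> a i \<and> a i \<subseteq> U \<and> measure M (U - F) < e i"
          by auto
        then show ?thesis by (intro exI[of _ "(F, U)"]) simp
      qed
      then have "\<forall>i. \<exists>FU. closed (fst FU) \<and> open (snd FU) \<and> fst FU \<subseteq> a i \<and> a i \<subseteq> snd FU \<and> measure M (snd FU - fst FU) < e i"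
        by simp
      from choice[OF this] obtain FU where FU: "\<forall>i. closed (fst (FU i)) \<and> open (snd (FU i)) \<and> fst (FU i) \<subseteq> a i \<and> a i \<subseteq> snd (FU i) \<and> measure M (snd (FU i) - fst (FU i)) < e i"
        ..
      define F where "F i = fst (FU i)" for i
      define U where "U i = snd (FU i)" for i
      have F: "closed (F i)" "F i \<subseteq> a i" and U: "open (U i)" "a i \<subseteq> U i"
        and FUm: "measure M (U i - F i) < e i" for i using FU unfolding F_def U_def by auto
      have sumE: "e sums (d/2)"
      proof -
        have "(\<lambda>i. (1/2::real) ^ Suc i) sums 1"
          using sums_divide[OF geometric_sums[of "1/2::real"], of 2] by (simp add: power_Suc)
        then show ?thesis unfolding e_def using sums_mult[of "\<lambda>i. (1/2::real) ^ Suc i" 1 "d/2"] by simp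
      qed
      have sU: "U i - F i \<in> sets M" for i using F U s by auto
      have summ: "summable (\<lambda>i. measure M (U i - F i))"
        by (rule summable_comparison_test'[of e 0]) (use sumE FUm in \<open>auto simp: sums_iff less_imp_le\<close>)
      have m1: "measure M (\<Union>i. U i - F i) \<le> d/2"
      proof -
        have "measure M (\<Union>i. U i - F i) \<le> (\<Sum>i. measure M (U i - F i))"
          using finite_measure_subadditive_countably[of "\<lambda>i. U i - F i"] sU summ by auto
        also have "\<dots> \<le> (\<Sum>i. e i)"
          using summ sumE FUm by (intro suminf_le) (auto simp: sums_iff less_imp_le)
        also have "\<dots> = d/2" using sumE by (simp add: sums_iff)
        finally show ?thesis .
      qed
      define B where "B n = (\<Union>i<n. a i)" for n
      have incB: "incseq B" unfolding B_def incseq_def by (auto intro: less_le_trans)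
      have sB: "B n \<in> sets M" for n unfolding B_def using aS by auto
      have UB: "(\<Union>n. B n) = (\<Union>i. a i)" unfolding B_def by auto
      have "(\<lambda>n. measure M (B n)) \<longlonglongrightarrow> measure M (\<Union>i. a i)"
        using finite_Lim_measure_incseq[of B] incB sB UB by auto
      then obtain N where N: "\<bar>measure M (B N) - measure M (\<Union>i. a i)\<bar> < d/2"
        using LIMSEQ_D[of _ _ "d/2"] \<open>d > 0\<close> by (force simp: dist_real_def)
      have "B N \<subseteq> (\<Union>i. a i)" unfolding B_def by auto
      then have "measure M ((\<Union>i. a i) - B N) = measure M (\<Union>i. a i) - measure M (B N)"
        using finite_measure_Diff[of "\<Union>i. a i" "B N"] aS sB by auto
      moreover have "measure M (B N) \<le> measure M (\<Union>i. a i)"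
        using \<open>B N \<subseteq> (\<Union>i. a i)\<close> aS by (intro finite_measure_mono) auto
      ultimately have m2: "measure M ((\<Union>i. a i) - B N) < d/2"
        using N by linarith
      define FF where "FF = (\<Union>i<N. F i)"
      define UU where "UU = (\<Union>i. U i)"
      have "closed FF" unfolding FF_def using F by (intro closed_UN) auto
      moreover have "open UU" unfolding UU_def using U by auto
      moreover have "FF \<subseteq> (\<Union>i. a i)" unfolding FF_def using F by auto
      moreover have "(\<Union>i. a i) \<subseteq> UU" unfolding UU_def using U by auto
      moreover have "measure M (UU - FF) < d"
      proof -
        have sub: "UU - FF \<subseteq> (\<Union>i. U i - F i) \<union> ((\<Union>i. a i) - B N)"
        proof
          fix x assume x: "x \<in> UU - FF"
          show "x \<in> (\<Union>i. U i - F i) \<union> ((\<Union>i. a i) - B N)"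
          proof (cases "x \<in> (\<Union>i. a i)")
            case False
            then have "x \<notin> a i" for i by auto
            moreover obtain i where "x \<in> U i" using x unfolding UU_def by auto
            ultimately have "x \<in> U i - F i" using F(2)[of i] by auto
            then show ?thesis by auto
          next
            case True
            show ?thesis
            proof (cases "x \<in> B N")
              case True
              then obtain j where "j < N" "x \<in> a j" unfolding B_def by auto
              then have "x \<in> U j - F j" using x U unfolding FF_def by auto
              then show ?thesis by auto
            qed (use True in auto)
          qed
        qed
        have "measure M (UU - FF) \<le> measure M ((\<Union>i. U i - F i) \<union> ((\<Union>i. a i) - B N))"
          using sub sU aS sB by (intro finite_measure_mono) auto
        also have "\<dots> \<le> measure M (\<Union>i. U i - F i) + measure M ((\<Union>i. a i) - B N)"
          using sU aS sB by (intro measure_Un_le) auto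
        finally show ?thesis using m1 m2 by linarith
      qed
      ultimately show "\<exists>F U. closed F \<and> open U \<and> F \<subseteq> (\<Union>i. a i) \<and> (\<Union>i. a i) \<subseteq> U \<and> measure M (U - F) < d"
        by auto
    qed
  qed
qed


definition approx :: "'a::metric_space measure \<Rightarrow> ('a \<Rightarrow> real) \<Rightarrow> bool" where
  "approx M f \<longleftrightarrow> (\<forall>d>0. \<exists>g. continuous_on UNIV g \<and> (\<integral>\<^sup>+x. ennreal \<bar>f x - g x\<bar> \<partial>M) < ennreal d)"

lemma meas_abs_diff:
  fixes M :: "'a::metric_space measure"
  assumes s: "sets M = sets borel" and f: "f \<in> borel_measurable borel" and g: "g \<in> borel_measurable borel"
  shows "(\<lambda>x. ennreal \<bar>f x - g x\<bar>) \<in> borel_measurable M"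
proof -
  have "(\<lambda>x. ennreal \<bar>f x - g x\<bar>) \<in> borel_measurable borel" using f g by measurable
  then show ?thesis using measurable_cong_sets[OF s refl] by blast
qed

lemma approx_indicator:
  fixes M :: "'a::metric_space measure"
  assumes fm: "finite_measure M" and s: "sets M = sets borel" and A: "A \<in> sets borel"
  shows "approx M (indicator A)"
  unfolding approx_def
proof (intro allI impI)
  interpret finite_measure M by fact
  fix d :: real assume "d > 0"
  then obtain F U where FU: "closed F" "open U" "F \<subseteq> A" "A \<subseteq> U" "measure M (U - F) < d"
    using regset_borel[OF fm s A] unfolding regset_def by auto
  obtain g :: "'a \<Rightarrow> real" where g: "continuous_on UNIV g" "\<And>x. 0 \<le> g x \<and> g x \<le> 1"
    "\<And>x. x \<in> F \<Longrightarrow> g x = 1" "\<And>x. x \<notin> U \<Longrightarrow> g x = 0"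
    using ury[OF FU(1) FU(2)] FU(3) FU(4) by (metis order_trans)
  have pt: "ennreal \<bar>indicator A x - g x\<bar> \<le> indicator (U - F) x" for x
  proof (cases "x \<in> U - F")
    case True
    have "\<bar>indicator A x - g x\<bar> \<le> 1" using g(2)[of x] by (auto simp: indicator_def)
    then show ?thesis using True by simp
  next
    case False
    then have "x \<in> F \<or> x \<notin> U" by auto
    then have "\<bar>indicator A x - g x\<bar> = 0" using g(3)[of x] g(4)[of x] FU(3) FU(4)
      by (auto simp: indicator_def)
    then show ?thesis by simp
  qed
  have "(\<integral>\<^sup>+x. ennreal \<bar>indicator A x - g x\<bar> \<partial>M) \<le> (\<integral>\<^sup>+x. indicator (U - F) x \<partial>M)"
    by (intro nn_integral_mono) (use pt in auto)
  also have "\<dots> = emeasure M (U - F)"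
    using FU s by (intro nn_integral_indicator) auto
  also have "\<dots> = ennreal (measure M (U - F))" by (simp add: emeasure_eq_measure)
  also have "\<dots> < ennreal d" using FU(5) \<open>d > 0\<close> by (simp add: ennreal_lessI)
  finally show "\<exists>g. continuous_on UNIV g \<and> (\<integral>\<^sup>+x. ennreal \<bar>indicator A x - g x\<bar> \<partial>M) < ennreal d"
    using g(1) by auto
qed

lemma approx_add:
  fixes M :: "'a::metric_space measure"
  assumes s: "sets M = sets borel" and f: "f \<in> borel_measurable borel" and h: "h \<in> borel_measurable borel"
    and af: "approx M f" and ah: "approx M h"
  shows "approx M (\<lambda>x. f x + h x)"
  unfolding approx_def
proof (intro allI impI)
  fix d :: real assume "d > 0"
  obtain g1 where g1: "continuous_on UNIV g1" "(\<integral>\<^sup>+x. ennreal \<bar>f x - g1 x\<bar> \<partial>M) < ennreal (d/2)"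
    using af \<open>d > 0\<close> unfolding approx_def by (meson half_gt_zero)
  obtain g2 where g2: "continuous_on UNIV g2" "(\<integral>\<^sup>+x. ennreal \<bar>h x - g2 x\<bar> \<partial>M) < ennreal (d/2)"
    using ah \<open>d > 0\<close> unfolding approx_def by (meson half_gt_zero)
  have m1: "g1 \<in> borel_measurable borel" "g2 \<in> borel_measurable borel"
    using g1(1) g2(1) by (auto intro: borel_measurable_continuous_onI)
  have "(\<integral>\<^sup>+x. ennreal \<bar>(f x + h x) - (g1 x + g2 x)\<bar> \<partial>M)
      \<le> (\<integral>\<^sup>+x. ennreal \<bar>f x - g1 x\<bar> + ennreal \<bar>h x - g2 x\<bar> \<partial>M)"
  proof (intro nn_integral_mono)
    fix x
    have "\<bar>(f x + h x) - (g1 x + g2 x)\<bar> \<le> \<bar>f x - g1 x\<bar> + \<bar>h x - g2 x\<bar>" by linarith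
    then show "ennreal \<bar>(f x + h x) - (g1 x + g2 x)\<bar> \<le> ennreal \<bar>f x - g1 x\<bar> + ennreal \<bar>h x - g2 x\<bar>"
      by (simp add: ennreal_leI flip: ennreal_plus)
  qed
  also have "\<dots> = (\<integral>\<^sup>+x. ennreal \<bar>f x - g1 x\<bar> \<partial>M) + (\<integral>\<^sup>+x. ennreal \<bar>h x - g2 x\<bar> \<partial>M)"
    by (intro nn_integral_add meas_abs_diff[OF s] f h m1)
  also have "\<dots> < ennreal (d/2 + d/2)"
    using g1(2) g2(2) by (rule add_mono_ennreal)
  finally show "\<exists>g. continuous_on UNIV g \<and> (\<integral>\<^sup>+x. ennreal \<bar>f x + h x - g x\<bar> \<partial>M) < ennreal d"
    using g1(1) g2(1) by (intro exI[of _ "\<lambda>x. g1 x + g2 x"]) (auto intro: continuous_on_add)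
qed

lemma approx_cmult:
  fixes M :: "'a::metric_space measure"
  assumes s: "sets M = sets borel" and f: "f \<in> borel_measurable borel" and af: "approx M f"
  shows "approx M (\<lambda>x. c * f x)"
  unfolding approx_def
proof (intro allI impI)
  fix d :: real assume "d > 0"
  then have "d / (\<bar>c\<bar> + 1) > 0" by simp
  then obtain g where g: "continuous_on UNIV g" "(\<integral>\<^sup>+x. ennreal \<bar>f x - g x\<bar> \<partial>M) < ennreal (d / (\<bar>c\<bar> + 1))"
    using af unfolding approx_def by blast
  have m: "g \<in> borel_measurable borel" using g(1) by (auto intro: borel_measurable_continuous_onI)
  have "(\<integral>\<^sup>+x. ennreal \<bar>c * f x - c * g x\<bar> \<partial>M) \<le> (\<integral>\<^sup>+x. ennreal (\<bar>c\<bar> + 1) * ennreal \<bar>f x - g x\<bar> \<partial>M)"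
  proof (intro nn_integral_mono)
    fix x
    have "\<bar>c * f x - c * g x\<bar> = \<bar>c\<bar> * \<bar>f x - g x\<bar>" by (simp add: abs_mult flip: right_diff_distrib)
    also have "\<dots> \<le> (\<bar>c\<bar> + 1) * \<bar>f x - g x\<bar>" by (simp add: mult_right_mono)
    finally have "ennreal \<bar>c * f x - c * g x\<bar> \<le> ennreal ((\<bar>c\<bar> + 1) * \<bar>f x - g x\<bar>)"
      by (rule ennreal_leI)
    also have "\<dots> = ennreal (\<bar>c\<bar> + 1) * ennreal \<bar>f x - g x\<bar>" by (rule ennreal_mult) auto
    finally show "ennreal \<bar>c * f x - c * g x\<bar> \<le> ennreal (\<bar>c\<bar> + 1) * ennreal \<bar>f x - g x\<bar>" .
  qed
  also have "\<dots> = ennreal (\<bar>c\<bar> + 1) * (\<integral>\<^sup>+x. ennreal \<bar>f x - g x\<bar> \<partial>M)"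
    by (intro nn_integral_cmult meas_abs_diff[OF s] f m)
  also have "\<dots> < ennreal (\<bar>c\<bar> + 1) * ennreal (d / (\<bar>c\<bar> + 1))"
    using g(2) by (intro ennreal_mult_strict_left_mono) (auto intro!: add_nonneg_pos)
  also have "\<dots> = ennreal ((\<bar>c\<bar> + 1) * (d / (\<bar>c\<bar> + 1)))"
    using \<open>d > 0\<close> by (intro ennreal_mult[symmetric]) auto
  also have "\<dots> = ennreal d" by simp
  finally show "\<exists>g. continuous_on UNIV g \<and> (\<integral>\<^sup>+x. ennreal \<bar>c * f x - g x\<bar> \<partial>M) < ennreal d"
    using g(1) by (intro exI[of _ "\<lambda>x. c * g x"]) (auto intro: continuous_on_mult continuous_on_const)
qed

lemma approx_zero:
  fixes M :: "'a::metric_space measure"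
  shows "approx M (\<lambda>x. 0)"
  unfolding approx_def by (intro allI impI exI[of _ "\<lambda>x. 0"]) auto


lemma approx_sum:
  fixes M :: "'a::metric_space measure"
  assumes s: "sets M = sets borel" and S: "finite S"
    and h: "\<And>v. v \<in> S \<Longrightarrow> h v \<in> borel_measurable borel \<and> approx M (h v)"
  shows "approx M (\<lambda>x. \<Sum>v\<in>S. h v x)"
  using S h
proof (induction S rule: finite_induct)
  case empty then show ?case using approx_zero by simp
next
  case (insert v S)
  have m: "(\<lambda>x. \<Sum>v\<in>S. h v x) \<in> borel_measurable borel"
    using insert.prems by (intro borel_measurable_sum) auto
  have "approx M (\<lambda>x. h v x + (\<Sum>v\<in>S. h v x))"
    using insert by (intro approx_add[OF s _ m]) auto
  then show ?case using insert.hyps by simp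
qed

lemma approx_simple:
  fixes M :: "'a::metric_space measure"
  assumes fm: "finite_measure M" and s: "sets M = sets borel"
    and f: "f \<in> borel_measurable borel" and fin: "finite (range f)"
  shows "approx M f"
proof -
  have pre: "f -` {v} \<in> sets borel" for v
    using measurable_sets[OF f, of "{v}"] by simp
  have eq: "(\<lambda>x. \<Sum>v\<in>range f. v * indicator (f -` {v}) x) = f"
  proof
    fix x
    have "(\<Sum>v\<in>range f. v * indicator (f -` {v}) x) = (\<Sum>v\<in>range f. if f x = v then v else 0)"
      by (intro sum.cong) (auto simp: indicator_def)
    also have "\<dots> = f x" using fin by (simp add: sum.delta)
    finally show "(\<Sum>v\<in>range f. v * indicator (f -` {v}) x) = f x" .
  qed
  have "approx M (\<lambda>x. \<Sum>v\<in>range f. v * indicator (f -` {v}) x)"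
  proof (rule approx_sum[OF s fin])
    fix v assume "v \<in> range f"
    have mi: "indicator (f -` {v}) \<in> borel_measurable (borel :: 'a measure)"
      using pre by (intro borel_measurable_indicator) auto
    show "(\<lambda>x. v * indicator (f -` {v}) x) \<in> borel_measurable borel \<and> approx M (\<lambda>x. v * indicator (f -` {v}) x)"
      using borel_measurable_times[OF borel_measurable_const mi, of v] approx_cmult[OF s mi approx_indicator[OF fm s pre]] by auto
  qed
  then show ?thesis using eq by simp
qed

lemma approx_unif:
  fixes M :: "'a::metric_space measure"
  assumes fm: "finite_measure M" and s: "sets M = sets borel"
    and f: "f \<in> borel_measurable borel"
    and A: "\<And>e. e > 0 \<Longrightarrow> \<exists>t. t \<in> borel_measurable borel \<and> approx M t \<and> (\<forall>x. \<bar>f x - t x\<bar> \<le> e)"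
  shows "approx M f"
  unfolding approx_def
proof (intro allI impI)
  interpret finite_measure M by fact
  fix d :: real assume "d > 0"
  define m where "m = measure M (space M)"
  have m0: "m \<ge> 0" unfolding m_def by simp
  define e where "e = d / (2 * (m + 1))"
  have e0: "e > 0" unfolding e_def using \<open>d > 0\<close> m0 by simp
  obtain t where t: "t \<in> borel_measurable borel" "approx M t" "\<And>x. \<bar>f x - t x\<bar> \<le> e"
    using A[OF e0] by auto
  obtain g where g: "continuous_on UNIV g" "(\<integral>\<^sup>+x. ennreal \<bar>t x - g x\<bar> \<partial>M) < ennreal (d/2)"
    using t(2) \<open>d > 0\<close> unfolding approx_def by (meson half_gt_zero)
  have mg: "g \<in> borel_measurable borel" using g(1) by (auto intro: borel_measurable_continuous_onI)
  have "(\<integral>\<^sup>+x. ennreal \<bar>f x - g x\<bar> \<partial>M) \<le> (\<integral>\<^sup>+x. ennreal e + ennreal \<bar>t x - g x\<bar> \<partial>M)"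
  proof (intro nn_integral_mono)
    fix x
    have "\<bar>f x - g x\<bar> \<le> e + \<bar>t x - g x\<bar>" using t(3)[of x] by linarith
    then show "ennreal \<bar>f x - g x\<bar> \<le> ennreal e + ennreal \<bar>t x - g x\<bar>"
      using e0 by (simp add: ennreal_leI flip: ennreal_plus)
  qed
  also have "\<dots> = (\<integral>\<^sup>+x. ennreal e \<partial>M) + (\<integral>\<^sup>+x. ennreal \<bar>t x - g x\<bar> \<partial>M)"
    by (intro nn_integral_add meas_abs_diff[OF s] t(1) mg) auto
  also have "(\<integral>\<^sup>+x. ennreal e \<partial>M) = ennreal (e * m)"
    using e0 m0 by (simp add: emeasure_eq_measure m_def ennreal_mult)
  also have "ennreal (e * m) + (\<integral>\<^sup>+x. ennreal \<bar>t x - g x\<bar> \<partial>M) < ennreal (d/2 + d/2)"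
  proof (rule add_mono_ennreal)
    have "e * m < d / 2"
    proof -
      have "e * m = d / 2 * (m / (m + 1))" unfolding e_def by (simp add: field_simps)
      also have "\<dots> < d / 2 * 1" using \<open>d > 0\<close> m0 by (intro mult_strict_left_mono) auto
      finally show ?thesis by simp
    qed
    then show "ennreal (e * m) < ennreal (d / 2)" using \<open>d > 0\<close> by (intro ennreal_lessI) auto
  qed (use g(2) in auto)
  finally show "\<exists>g. continuous_on UNIV g \<and> (\<integral>\<^sup>+x. ennreal \<bar>f x - g x\<bar> \<partial>M) < ennreal d"
    using g(1) by auto
qed

lemma approx_bounded:
  fixes M :: "'a::metric_space measure"
  assumes fm: "finite_measure M" and s: "sets M = sets borel"
    and f: "f \<in> borel_measurable borel" and T: "\<And>x. \<bar>f x\<bar> \<le> T"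
  shows "approx M f"
proof (rule approx_unif[OF fm s f])
  fix e :: real assume "e > 0"
  then obtain n :: nat where n: "1 / real (Suc n) < e" using nat_approx_posE by blast
  define N where "N = real (Suc n)"
  have N0: "N > 0" unfolding N_def by simp
  define t where "t x = real_of_int \<lfloor>f x * N\<rfloor> / N" for x
  have mt: "t \<in> borel_measurable borel" unfolding t_def using f by measurable
  have rng: "range t \<subseteq> (\<lambda>k. real_of_int k / N) ` {\<lfloor>- T * N\<rfloor> .. \<lfloor>T * N\<rfloor>}"
  proof
    fix y assume "y \<in> range t"
    then obtain x where x: "y = t x" by auto
    have fx: "- T \<le> f x" "f x \<le> T" using T[of x] by auto
    have "- T * N \<le> f x * N" using mult_right_mono[OF fx(1) less_imp_le[OF N0]] .
    moreover have "f x * N \<le> T * N" using mult_right_mono[OF fx(2) less_imp_le[OF N0]] .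
    ultimately have "\<lfloor>f x * N\<rfloor> \<in> {\<lfloor>- T * N\<rfloor> .. \<lfloor>T * N\<rfloor>}" by (auto intro: floor_mono)
    then show "y \<in> (\<lambda>k. real_of_int k / N) ` {\<lfloor>- T * N\<rfloor> .. \<lfloor>T * N\<rfloor>}" unfolding x t_def by auto
  qed
  have "finite (range t)" by (rule finite_subset[OF rng]) auto
  then have at: "approx M t" by (rule approx_simple[OF fm s mt])
  have "\<bar>f x - t x\<bar> \<le> e" for x
  proof -
    have "real_of_int \<lfloor>f x * N\<rfloor> \<le> f x * N" "f x * N < real_of_int \<lfloor>f x * N\<rfloor> + 1"
      by linarith+
    then have "t x \<le> f x" "f x < t x + 1 / N" unfolding t_def using N0 by (auto simp: field_simps)
    moreover have "1 / N < e" using n unfolding N_def by simp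
    ultimately show ?thesis by linarith
  qed
  then show "\<exists>t. t \<in> borel_measurable borel \<and> approx M t \<and> (\<forall>x. \<bar>f x - t x\<bar> \<le> e)"
    using mt at by blast
qed

lemma approx_final:
  fixes M :: "'a::metric_space measure"
  assumes fm: "finite_measure M" and s: "sets M = sets borel"
    and f: "f \<in> borel_measurable borel" and T: "\<And>x. \<bar>f x\<bar> \<le> T" and d: "d > 0"
  shows "\<exists>g. continuous_on UNIV g \<and> (\<forall>x. \<bar>g x\<bar> \<le> T) \<and> (\<integral>\<^sup>+x. ennreal \<bar>f x - g x\<bar> \<partial>M) < ennreal d"
proof -
  obtain g where g: "continuous_on UNIV g" "(\<integral>\<^sup>+x. ennreal \<bar>f x - g x\<bar> \<partial>M) < ennreal d"
    using approx_bounded[OF fm s f T] d unfolding approx_def by blast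
  define g' where "g' x = max (- T) (min T (g x))" for x
  have "continuous_on UNIV g'" unfolding g'_def
    by (intro continuous_on_max continuous_on_min continuous_on_const g(1))
  moreover have "\<bar>g' x\<bar> \<le> T" for x using T[of x] unfolding g'_def by auto
  moreover have "(\<integral>\<^sup>+x. ennreal \<bar>f x - g' x\<bar> \<partial>M) \<le> (\<integral>\<^sup>+x. ennreal \<bar>f x - g x\<bar> \<partial>M)"
  proof (intro nn_integral_mono)
    fix x
    have "\<bar>f x - g' x\<bar> \<le> \<bar>f x - g x\<bar>" using T[of x] unfolding g'_def by auto
    then show "ennreal \<bar>f x - g' x\<bar> \<le> ennreal \<bar>f x - g x\<bar>" by (rule ennreal_leI)
  qed
  ultimately show ?thesis using g(2) by (intro exI[of _ g']) auto
qed


lemma quad_nonneg_imp: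
  fixes a b c :: real
  assumes a: "a \<ge> 0" and q: "\<And>t. 0 \<le> c + 2 * t * b + t^2 * a"
  shows "b^2 \<le> c * a"
proof (cases "a = 0")
  case True
  have "b = 0"
  proof (rule ccontr)
    assume "b \<noteq> 0"
    have "0 \<le> c + 2 * (- (\<bar>c\<bar> + 1) / (2 * b)) * b" using q[of "- (\<bar>c\<bar> + 1) / (2 * b)"] True by simp
    also have "\<dots> = c - (\<bar>c\<bar> + 1)" using \<open>b \<noteq> 0\<close> by (simp add: field_simps)
    finally show False by linarith
  qed
  then show ?thesis using True by simp
next
  case False
  then have ap: "a > 0" using a by simp
  have "0 \<le> c + 2 * (- b / a) * b + (- b / a)^2 * a" by (rule q)
  also have "\<dots> = c - b^2 / a" using ap by (simp add: field_simps power2_eq_square)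
  finally have "b^2 / a \<le> c" by simp
  then show ?thesis using ap by (simp add: divide_le_eq)
qed

lemma rkhs_facts:
  assumes "is_RKHS k H ip"
  shows "\<And>f g. f \<in> H \<Longrightarrow> g \<in> H \<Longrightarrow> (\<lambda>x. f x + g x) \<in> H"
    and "\<And>c f. f \<in> H \<Longrightarrow> (\<lambda>x. c * f x) \<in> H"
    and "\<And>f g. f \<in> H \<Longrightarrow> g \<in> H \<Longrightarrow> ip f g = ip g f"
    and "\<And>f g h. f \<in> H \<Longrightarrow> g \<in> H \<Longrightarrow> h \<in> H \<Longrightarrow> ip (\<lambda>x. f x + g x) h = ip f h + ip g h"
    and "\<And>c f g. f \<in> H \<Longrightarrow> g \<in> H \<Longrightarrow> ip (\<lambda>x. c * f x) g = c * ip f g"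
    and "\<And>f. f \<in> H \<Longrightarrow> ip f f \<ge> 0"
    and "\<And>x. (\<lambda>y. k x y) \<in> H"
    and "\<And>f x. f \<in> H \<Longrightarrow> f x = ip f (\<lambda>y. k x y)"
  using assms unfolding is_RKHS_def by blast+

lemma rkhs_cs:
  assumes R: "is_RKHS k H ip" and f: "f \<in> H" and g: "g \<in> H"
  shows "(ip f g)^2 \<le> ip f f * ip g g"
proof -
  note F = rkhs_facts[OF R]
  have "0 \<le> ip f f + 2 * t * ip f g + t^2 * ip g g" for t
  proof -
    define u where "u = (\<lambda>x. f x + t * g x)"
    have tg: "(\<lambda>x. t * g x) \<in> H" using F(2) g by blast
    have u: "u \<in> H" unfolding u_def using F(1)[OF f tg] .
    have "0 \<le> ip u u" using F(6)[OF u] .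
    also have "ip u u = ip f u + ip (\<lambda>x. t * g x) u" unfolding u_def using F(4)[OF f tg] u unfolding u_def by blast
    also have "ip (\<lambda>x. t * g x) u = t * ip g u" using F(5)[OF g u] .
    also have "ip f u = ip u f" using F(3)[OF f u] .
    also have "ip u f = ip f f + t * ip g f" unfolding u_def using F(4)[OF f tg f] F(5)[OF g f] by simp
    also have "ip g u = ip u g" using F(3)[OF g u] .
    also have "ip u g = ip f g + t * ip g g" unfolding u_def using F(4)[OF f tg g] F(5)[OF g g] by simp
    also have "ip g f = ip f g" using F(3)[OF g f] .
    finally show ?thesis by (simp add: algebra_simps power2_eq_square)
  qed
  then show ?thesis using quad_nonneg_imp[of "ip g g" "ip f f" "ip f g"] F(6)[OF g] by simp
qed

lemma kcomp:
  fixes k :: "'a::metric_space \<Rightarrow> 'a \<Rightarrow> real"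
  assumes k: "continuous_on UNIV (\<lambda>(x, y). k x y)"
    and a: "continuous_on UNIV a" and b: "continuous_on UNIV b"
  shows "continuous_on UNIV (\<lambda>y. k (a y) (b y))"
proof -
  have "continuous_on UNIV ((\<lambda>(x, y). k x y) \<circ> (\<lambda>y. (a y, b y)))"
    by (rule continuous_on_compose) (auto intro: continuous_on_Pair a b continuous_on_subset[OF k])
  then show ?thesis by (simp add: o_def)
qed

lemma rkhs_cont:
  fixes k :: "'a::metric_space \<Rightarrow> 'a \<Rightarrow> real"
  assumes R: "is_RKHS k H ip" and kc: "continuous_on UNIV (\<lambda>(x, y). k x y)" and f: "f \<in> H"
  shows "continuous_on UNIV f"
proof -
  note F = rkhs_facts[OF R]
  define D where "D x y = (\<lambda>z. k x z + (-1) * k y z)" for x y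
  have DH: "D x y \<in> H" for x y
    unfolding D_def using F(1)[OF F(7)[of x] F(2)[OF F(7)[of y]]] .
  have diff: "h x - h y = ip h (D x y)" if h: "h \<in> H" for h x y
  proof -
    have m: "(\<lambda>z. (-1) * k y z) \<in> H" using F(2)[OF F(7)[of y]] .
    have "ip h (D x y) = ip (D x y) h" using F(3)[OF h DH] .
    also have "\<dots> = ip (\<lambda>z. k x z) h + ip (\<lambda>z. (-1) * k y z) h"
      unfolding D_def using F(4)[OF F(7)[of x] m h] .
    also have "\<dots> = ip (\<lambda>z. k x z) h - ip (\<lambda>z. k y z) h"
      using F(5)[OF F(7)[of y] h, of "-1"] by simp
    also have "\<dots> = ip h (\<lambda>z. k x z) - ip h (\<lambda>z. k y z)"
      using F(3)[OF h F(7)[of x]] F(3)[OF h F(7)[of y]] by simp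
    also have "\<dots> = h x - h y" using F(8)[OF h, of x] F(8)[OF h, of y] by simp
    finally show ?thesis by simp
  qed
  have bound: "(f x - f y)^2 \<le> ip f f * (k x x - k y x - (k x y - k y y))" for x y
  proof -
    have "ip (D x y) (D x y) = D x y x - D x y y" using diff[OF DH] by simp
    also have "\<dots> = k x x - k y x - (k x y - k y y)" unfolding D_def by simp
    finally have e: "ip (D x y) (D x y) = k x x - k y x - (k x y - k y y)" .
    have "(f x - f y)^2 = (ip f (D x y))^2" using diff[OF f] by simp
    also have "\<dots> \<le> ip f f * ip (D x y) (D x y)" by (rule rkhs_cs[OF R f DH])
    finally show ?thesis using e by simp
  qed
  show ?thesis
  proof (rule continuous_at_imp_continuous_on, intro ballI)
    fix x :: 'a assume "x \<in> UNIV"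
    define \<phi> where "\<phi> y = ip f f * (k x x - k y x - (k x y - k y y))" for y
    have c\<phi>: "continuous_on UNIV \<phi>" unfolding \<phi>_def
      by (intro continuous_intros kcomp[OF kc])
    have "((\<lambda>y. sqrt (\<phi> y)) \<longlongrightarrow> sqrt (\<phi> x)) (at x)"
      using c\<phi> by (intro tendsto_intros) (auto simp: continuous_on_def)
    then have lim0: "((\<lambda>y. sqrt (\<phi> y)) \<longlongrightarrow> 0) (at x)" unfolding \<phi>_def by simp
    have "((\<lambda>y. f y - f x) \<longlongrightarrow> 0) (at x)"
    proof (rule Lim_null_comparison[OF _ lim0])
      show "\<forall>\<^sub>F y in at x. norm (f y - f x) \<le> sqrt (\<phi> y)"
      proof (intro always_eventually allI)
        fix y
        have "(f y - f x)^2 \<le> \<phi> y" unfolding \<phi>_def using bound[of x y]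
          by (simp add: power2_commute)
        then have "sqrt ((f y - f x)^2) \<le> sqrt (\<phi> y)" by (rule real_sqrt_le_mono)
        then show "norm (f y - f x) \<le> sqrt (\<phi> y)" by simp
      qed
    qed
    then show "isCont f x" unfolding isCont_def by (rule LIM_zero_cancel)
  qed
qed

lemma convex_lip:
  fixes l :: "real \<Rightarrow> real"
  assumes mono: "mono l" and cvx: "convex_on UNIV l" and s: "s \<le> b" and t: "t \<le> b"
  shows "l t \<le> l s + (l (b + 1) - l b) * \<bar>t - s\<bar>"
proof (cases "t \<le> s")
  case True
  have "l t \<le> l s" using mono True by (simp add: monoD)
  moreover have "l b \<le> l (b + 1)" using mono by (simp add: monoD)
  then have "0 \<le> (l (b + 1) - l b) * \<bar>t - s\<bar>" by simp
  with \<open>l t \<le> l s\<close> show ?thesis by linarith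
next
  case False
  then have st: "s < t" by simp
  define la where "la = (t - s) / (b + 1 - s)"
  define \<mu> where "\<mu> = (b - s) / (b + 1 - s)"
  have den: "b + 1 - s > 0" using s by simp
  have l01: "0 \<le> la" "la \<le> 1" unfolding la_def using st t den by (auto simp: divide_le_eq)
  have m01: "0 \<le> \<mu>" "\<mu> \<le> 1" unfolding \<mu>_def using s den by (auto simp: divide_le_eq)
  have et: "(1 - la) *\<^sub>R s + la *\<^sub>R (b + 1) = t"
  proof -
    have "la * (b + 1 - s) = t - s" unfolding la_def using den by simp
    moreover have "(1 - la) *\<^sub>R s + la *\<^sub>R (b + 1) = s + la * (b + 1 - s)" by (simp add: algebra_simps)
    ultimately show ?thesis by simp
  qed
  have eb: "(1 - \<mu>) *\<^sub>R s + \<mu> *\<^sub>R (b + 1) = b"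
  proof -
    have "\<mu> * (b + 1 - s) = b - s" unfolding \<mu>_def using den by simp
    moreover have "(1 - \<mu>) *\<^sub>R s + \<mu> *\<^sub>R (b + 1) = s + \<mu> * (b + 1 - s)" by (simp add: algebra_simps)
    ultimately show ?thesis by simp
  qed
  have c1: "l t \<le> (1 - la) * l s + la * l (b + 1)"
    using convex_onD[OF cvx l01, of s "b + 1"] et by simp
  have c2: "l b \<le> (1 - \<mu>) * l s + \<mu> * l (b + 1)"
    using convex_onD[OF cvx m01, of s "b + 1"] eb by simp
  have c2': "l (b + 1) - l s \<le> (b + 1 - s) * (l (b + 1) - l b)"
  proof -
    have "(b + 1 - s) * l b \<le> (b + 1 - s) * ((1 - \<mu>) * l s + \<mu> * l (b + 1))"
      using c2 den by (intro mult_left_mono) auto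
    also have "\<dots> = (b + 1 - s) * l s - ((b + 1 - s) * \<mu>) * l s + ((b + 1 - s) * \<mu>) * l (b + 1)"
      by (simp add: algebra_simps)
    also have "(b + 1 - s) * \<mu> = b - s" unfolding \<mu>_def using den by simp
    also have "(b + 1 - s) * l s - (b - s) * l s + (b - s) * l (b + 1) = l s + (b - s) * l (b + 1)"
      by (simp add: algebra_simps)
    finally show ?thesis by (simp add: algebra_simps)
  qed
  have "l t - l s \<le> la * (l (b + 1) - l s)" using c1 by (simp add: algebra_simps)
  also have "\<dots> \<le> la * ((b + 1 - s) * (l (b + 1) - l b))" using c2' l01 by (intro mult_left_mono) auto
  also have "\<dots> = (la * (b + 1 - s)) * (l (b + 1) - l b)" by (simp add: mult.assoc)
  also have "la * (b + 1 - s) = t - s" unfolding la_def using den by simp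
  finally show ?thesis using st by (simp add: mult.commute)
qed


lemma lab_cases: "lab b = 1 \<or> lab b = -1"
  by (cases b) (auto simp: lab_def)

lemma clip_bound:
  fixes l :: "real \<Rightarrow> real"
  assumes mono: "mono l" and nn: "\<And>z. l z \<ge> 0" and T: "T \<ge> 0" and y: "y = 1 \<or> y = -1"
  shows "l (\<rho> - y * max (- T) (min T v)) \<le> l (\<rho> - y * v) + l \<rho> * indicator {x. T < \<bar>x\<bar>} v"
proof (cases "\<bar>v\<bar> \<le> T")
  case True
  then have "max (- T) (min T v) = v" by auto
  then show ?thesis using nn[of \<rho>] by (simp add: indicator_def)
next
  case False
  then have ind: "indicator {x. T < \<bar>x\<bar>} v = (1::real)" by (simp add: indicator_def)
  have m: "\<And>a b. a \<le> b \<Longrightarrow> l a \<le> l b" using mono by (simp add: monoD)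
  show ?thesis
  proof (cases "y * v > T")
    case True
    have "y * max (- T) (min T v) = T" using y True False T by auto
    then have "l (\<rho> - y * max (- T) (min T v)) \<le> l \<rho>" using m[of "\<rho> - T" \<rho>] T by simp
    then show ?thesis using ind nn[of "\<rho> - y * v"] by simp
  next
    case False2: False
    then have "y * v < - T" using y False T by auto
    then have "y * max (- T) (min T v) = - T" using y False T by auto
    moreover have "l (\<rho> + T) \<le> l (\<rho> - y * v)" using m[of "\<rho> + T" "\<rho> - y * v"] \<open>y * v < - T\<close> by simp
    ultimately show ?thesis using ind nn[of \<rho>] by simp
  qed
qed

lemma meas_loss:
  fixes P :: "('a::metric_space \<times> bool) measure"
  assumes sP: "sets P = sets (borel \<Otimes>\<^sub>M count_space UNIV)" and l: "continuous_on UNIV l"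
    and f: "f \<in> borel_measurable borel"
  shows "(\<lambda>z. ennreal (l (\<rho> - lab (snd z) * f (fst z)))) \<in> borel_measurable P"
proof -
  have [measurable]: "l \<in> borel_measurable borel" using l by (rule borel_measurable_continuous_onI)
  have [measurable]: "f \<in> borel_measurable borel" by (rule f)
  have [measurable]: "(\<lambda>z::'a \<times> bool. lab (snd z)) \<in> borel_measurable (borel \<Otimes>\<^sub>M count_space UNIV)"
    by (rule measurable_compose[OF measurable_snd]) simp
  have "(\<lambda>z. ennreal (l (\<rho> - lab (snd z) * f (fst z)))) \<in> borel_measurable (borel \<Otimes>\<^sub>M count_space UNIV)"
    by measurable
  then show ?thesis using measurable_cong_sets[OF sP refl] by blast
qed


lemma approx_risk:
  fixes P :: "('a::metric_space \<times> bool) measure" and l :: "real \<Rightarrow> real"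
  assumes pP: "prob_space P" and sP: "sets P = sets (borel \<Otimes>\<^sub>M count_space UNIV)"
    and univ: "universal_RKHS H"
    and mono: "mono l" and cvx: "convex_on UNIV l" and nn: "\<And>z. l z \<ge> 0"
    and f: "f \<in> borel_measurable borel" and e: "e > 0"
  shows "\<exists>h\<in>H. (\<integral>\<^sup>+z. ennreal (l (\<rho> - lab (snd z) * h (fst z))) \<partial>P)
            \<le> (\<integral>\<^sup>+z. ennreal (l (\<rho> - lab (snd z) * f (fst z))) \<partial>P) + ennreal e"
proof -
  interpret prob_space P by fact
  have lc: "continuous_on UNIV l" using convex_on_continuous[OF open_UNIV cvx] .
  have fstm: "fst \<in> measurable P borel"
    by (subst measurable_cong_sets[OF sP refl]) (rule measurable_fst)
  define \<mu> where "\<mu> = distr P borel fst"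
  have fm\<mu>: "finite_measure \<mu>" unfolding \<mu>_def
    using prob_space_distr[OF fstm] prob_space.finite_measure by blast
  have s\<mu>: "sets \<mu> = sets borel" unfolding \<mu>_def by simp
  define B where "B n = {x. real n < \<bar>f x\<bar>}" for n :: nat
  have Bm: "B n \<in> sets borel" for n unfolding B_def using f by measurable
  define A where "A n = fst -` B n \<inter> space P" for n
  have Am: "A n \<in> sets P" for n unfolding A_def using measurable_sets[OF fstm Bm] .
  have decA: "decseq A" unfolding decseq_def A_def B_def by auto
  have IA: "(\<Inter>n. A n) = {}"
  proof (rule equals0I)
    fix z :: "'a \<times> bool" assume z: "z \<in> (\<Inter>n. A n)"
    obtain m :: nat where m: "\<bar>f (fst z)\<bar> < real m" using reals_Archimedean2 by auto
    have "z \<in> A m" using z by auto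
    then show False using m unfolding A_def B_def by auto
  qed
  have "(\<lambda>n. measure P (A n)) \<longlonglongrightarrow> 0"
    using finite_Lim_measure_decseq[of A] Am decA IA by auto
  then have "(\<lambda>n. l \<rho> * measure P (A n)) \<longlonglongrightarrow> l \<rho> * 0" by (intro tendsto_mult tendsto_const)
  then obtain n where n: "\<bar>l \<rho> * measure P (A n)\<bar> < e / 3"
    using LIMSEQ_D[of _ 0 "e/3"] e by (force simp: dist_real_def)
  then have n': "l \<rho> * measure P (A n) \<le> e / 3" by linarith
  define T where "T = real n"
  have T0: "T \<ge> 0" unfolding T_def by simp
  define fT where "fT x = max (- T) (min T (f x))" for x
  have fTm: "fT \<in> borel_measurable borel" unfolding fT_def using f by measurable
  have fTb: "\<bar>fT x\<bar> \<le> T" for x unfolding fT_def using T0 by auto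
  define b where "b = \<rho> + T + 1"
  define L where "L = l (b + 1) - l b"
  have L0: "L \<ge> 0" unfolding L_def using mono by (simp add: monoD)
  define d where "d = e / (3 * (L + 1))"
  have d0: "d > 0" unfolding d_def using e L0 by simp
  obtain g where g: "continuous_on UNIV g" "\<And>x. \<bar>g x\<bar> \<le> T"
      "(\<integral>\<^sup>+x. ennreal \<bar>fT x - g x\<bar> \<partial>\<mu>) < ennreal d"
    using approx_final[OF fm\<mu> s\<mu> fTm fTb d0] by blast
  have gm: "g \<in> borel_measurable borel" using g(1) by (rule borel_measurable_continuous_onI)
  define \<delta> where "\<delta> = min 1 d"
  have \<delta>0: "\<delta> > 0" unfolding \<delta>_def using d0 by simp
  obtain h where hH: "h \<in> H" and hg: "\<And>x. \<bar>h x - g x\<bar> \<le> \<delta>"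
    using univ g(1) \<delta>0 unfolding universal_RKHS_def by blast
  have Ld: "L * d \<le> e / 3"
  proof -
    have "L * d = e / 3 * (L / (L + 1))" unfolding d_def using L0 by (simp add: field_simps)
    also have "\<dots> \<le> e / 3 * 1" using e L0 by (intro mult_left_mono) auto
    finally show ?thesis by simp
  qed
  have pt: "l (\<rho> - lab (snd z) * h (fst z)) \<le> l (\<rho> - lab (snd z) * f (fst z)) + l \<rho> * indicator (A n) z
            + L * \<bar>fT (fst z) - g (fst z)\<bar> + L * d" if z: "z \<in> space P" for z
  proof -
    define y where "y = lab (snd z)"
    define x where "x = fst z"
    have y: "y = 1 \<or> y = -1" unfolding y_def by (rule lab_cases)
    have hb: "\<bar>h x\<bar> \<le> T + 1" using hg[of x] g(2)[of x] \<delta>_def by linarith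
    have ay: "\<bar>y\<bar> = 1" using y by auto
    have s1: "\<rho> - y * fT x \<le> b"
    proof -
      have "\<bar>y * fT x\<bar> \<le> T" using fTb[of x] ay by (simp add: abs_mult)
      then show ?thesis unfolding b_def by linarith
    qed
    have s2: "\<rho> - y * h x \<le> b"
    proof -
      have "\<bar>y * h x\<bar> \<le> T + 1" using hb ay by (simp add: abs_mult)
      then show ?thesis unfolding b_def by linarith
    qed
    have "l (\<rho> - y * h x) \<le> l (\<rho> - y * fT x) + L * \<bar>(\<rho> - y * h x) - (\<rho> - y * fT x)\<bar>"
      unfolding L_def by (rule convex_lip[OF mono cvx s1 s2])
    also have "\<bar>(\<rho> - y * h x) - (\<rho> - y * fT x)\<bar> = \<bar>h x - fT x\<bar>"
    proof -
      have "(\<rho> - y * h x) - (\<rho> - y * fT x) = y * (fT x - h x)" by (simp add: algebra_simps)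
      then show ?thesis using ay by (simp add: abs_mult abs_minus_commute)
    qed
    also have "L * \<bar>h x - fT x\<bar> \<le> L * (\<bar>fT x - g x\<bar> + d)"
    proof -
      have "\<bar>h x - fT x\<bar> \<le> \<bar>fT x - g x\<bar> + d" using hg[of x] \<delta>_def by linarith
      then show ?thesis using L0 by (rule mult_left_mono)
    qed
    also have "l (\<rho> - y * fT x) \<le> l (\<rho> - y * f x) + l \<rho> * indicator {v. T < \<bar>v\<bar>} (f x)"
      unfolding fT_def by (rule clip_bound[OF mono nn T0 y])
    also have "indicator {v. T < \<bar>v\<bar>} (f x) = (indicator (A n) z :: real)"
      using z unfolding A_def B_def x_def T_def by (simp add: indicator_def)
    finally show ?thesis unfolding x_def y_def by (simp add: algebra_simps)
  qed
  have m1: "(\<lambda>z. ennreal (l (\<rho> - lab (snd z) * f (fst z)))) \<in> borel_measurable P"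
    by (rule meas_loss[OF sP lc f])
  have m2: "(\<lambda>z. ennreal (l \<rho> * indicator (A n) z)) \<in> borel_measurable P"
    using Am by measurable
  have m3: "(\<lambda>z. ennreal (L * \<bar>fT (fst z) - g (fst z)\<bar>)) \<in> borel_measurable P"
    using fstm fTm gm by measurable
  have m4: "(\<lambda>z. ennreal (L * d)) \<in> borel_measurable P" by simp
  have "(\<integral>\<^sup>+z. ennreal (l (\<rho> - lab (snd z) * h (fst z))) \<partial>P)
      \<le> (\<integral>\<^sup>+z. ennreal (l (\<rho> - lab (snd z) * f (fst z))) + ennreal (l \<rho> * indicator (A n) z)
            + ennreal (L * \<bar>fT (fst z) - g (fst z)\<bar>) + ennreal (L * d) \<partial>P)"
  proof (rule nn_integral_mono)
    fix z assume z: "z \<in> space P"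
    have a0: "0 \<le> l (\<rho> - lab (snd z) * f (fst z))" by (rule nn)
    have b0: "0 \<le> l \<rho> * indicator (A n) z" using nn[of \<rho>] by simp
    have c0: "0 \<le> L * \<bar>fT (fst z) - g (fst z)\<bar>" using L0 by simp
    have d0': "0 \<le> L * d" using L0 d0 by simp
    have "ennreal (l (\<rho> - lab (snd z) * h (fst z)))
        \<le> ennreal (l (\<rho> - lab (snd z) * f (fst z)) + l \<rho> * indicator (A n) z
            + L * \<bar>fT (fst z) - g (fst z)\<bar> + L * d)"
      using pt[OF z] by (rule ennreal_leI)
    also have "\<dots> = ennreal (l (\<rho> - lab (snd z) * f (fst z))) + ennreal (l \<rho> * indicator (A n) z)
            + ennreal (L * \<bar>fT (fst z) - g (fst z)\<bar>) + ennreal (L * d)"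
      using a0 b0 c0 d0' by (simp add: ennreal_plus add_nonneg_nonneg)
    finally show "ennreal (l (\<rho> - lab (snd z) * h (fst z)))
        \<le> ennreal (l (\<rho> - lab (snd z) * f (fst z))) + ennreal (l \<rho> * indicator (A n) z)
            + ennreal (L * \<bar>fT (fst z) - g (fst z)\<bar>) + ennreal (L * d)" .
  qed
  also have "\<dots> = (\<integral>\<^sup>+z. ennreal (l (\<rho> - lab (snd z) * f (fst z))) \<partial>P)
      + (\<integral>\<^sup>+z. ennreal (l \<rho> * indicator (A n) z) \<partial>P)
      + (\<integral>\<^sup>+z. ennreal (L * \<bar>fT (fst z) - g (fst z)\<bar>) \<partial>P) + (\<integral>\<^sup>+z. ennreal (L * d) \<partial>P)"
    using m1 m2 m3 m4 by (simp add: nn_integral_add)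
  also have "(\<integral>\<^sup>+z. ennreal (l \<rho> * indicator (A n) z) \<partial>P) \<le> ennreal (e / 3)"
  proof -
    have "(\<integral>\<^sup>+z. ennreal (l \<rho> * indicator (A n) z) \<partial>P) = (\<integral>\<^sup>+z. ennreal (l \<rho>) * indicator (A n) z \<partial>P)"
      by (intro nn_integral_cong) (auto simp: indicator_def)
    also have "\<dots> = ennreal (l \<rho>) * emeasure P (A n)" using Am by (rule nn_integral_cmult_indicator)
    also have "\<dots> = ennreal (l \<rho> * measure P (A n))"
      using nn[of \<rho>] by (simp add: emeasure_eq_measure ennreal_mult)
    also have "\<dots> \<le> ennreal (e / 3)" using n' by (rule ennreal_leI)
    finally show ?thesis .
  qed
  also have "(\<integral>\<^sup>+z. ennreal (L * \<bar>fT (fst z) - g (fst z)\<bar>) \<partial>P) \<le> ennreal (e / 3)"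
  proof -
    have mm: "(\<lambda>x. ennreal \<bar>fT x - g x\<bar>) \<in> borel_measurable borel" using fTm gm by measurable
    have "(\<integral>\<^sup>+z. ennreal (L * \<bar>fT (fst z) - g (fst z)\<bar>) \<partial>P) = (\<integral>\<^sup>+z. ennreal L * ennreal \<bar>fT (fst z) - g (fst z)\<bar> \<partial>P)"
      using L0 by (intro nn_integral_cong) (simp add: ennreal_mult)
    also have "\<dots> = ennreal L * (\<integral>\<^sup>+z. ennreal \<bar>fT (fst z) - g (fst z)\<bar> \<partial>P)"
      using measurable_compose[OF fstm fTm] measurable_compose[OF fstm gm] by (intro nn_integral_cmult) measurable
    also have "(\<integral>\<^sup>+z. ennreal \<bar>fT (fst z) - g (fst z)\<bar> \<partial>P) = (\<integral>\<^sup>+x. ennreal \<bar>fT x - g x\<bar> \<partial>\<mu>)"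
      unfolding \<mu>_def using mm by (intro nn_integral_distr[symmetric] fstm) simp
    also have "ennreal L * (\<integral>\<^sup>+x. ennreal \<bar>fT x - g x\<bar> \<partial>\<mu>) \<le> ennreal L * ennreal d"
      using g(3) by (intro mult_left_mono) auto
    also have "\<dots> = ennreal (L * d)" using L0 d0 by (simp add: ennreal_mult)
    also have "\<dots> \<le> ennreal (e / 3)" using Ld by (rule ennreal_leI)
    finally show ?thesis .
  qed
  also have "(\<integral>\<^sup>+z. ennreal (L * d) \<partial>P) \<le> ennreal (e / 3)"
    using Ld by (simp add: emeasure_space_1 ennreal_leI)
  finally have "(\<integral>\<^sup>+z. ennreal (l (\<rho> - lab (snd z) * h (fst z))) \<partial>P)
      \<le> (\<integral>\<^sup>+z. ennreal (l (\<rho> - lab (snd z) * f (fst z))) \<partial>P) + ennreal (e/3) + ennreal (e/3) + ennreal (e/3)"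
    by (simp add: add_mono)
  also have "\<dots> = (\<integral>\<^sup>+z. ennreal (l (\<rho> - lab (snd z) * f (fst z))) \<partial>P) + ennreal e"
    using e by (simp add: add.assoc flip: ennreal_plus)
  finally show ?thesis using hH by blast
qed


theorem lemma3:
  fixes k :: "'a::metric_space \<Rightarrow> 'a \<Rightarrow> real"
    and H :: "('a \<Rightarrow> real) set"
    and ip :: "('a \<Rightarrow> real) \<Rightarrow> ('a \<Rightarrow> real) \<Rightarrow> real"
    and K :: real
    and P :: "('a \<times> bool) measure"
    and \<eta> :: "'a \<Rightarrow> real"
    and \<epsilon> :: real
    and l :: "real \<Rightarrow> real"
  assumes "compact (UNIV :: 'a set)"
    and "is_kernel k"
    and "continuous_on UNIV (\<lambda>(x, y). k x y)"
    and "is_RKHS k H ip"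
    and "universal_RKHS H"
    and "\<forall>x. sqrt (k x x) \<le> K"
    and "prob_space P"
    and "sets P = sets (borel \<Otimes>\<^sub>M count_space UNIV)"
    and "\<eta> \<in> borel_measurable borel"
    and "\<forall>A\<in>sets borel. measure P (A \<times> {True}) = (LINT x:A|distr P borel fst. \<eta> x)"
    and "\<epsilon> > 0"
    and "measure (distr P borel fst) {x. \<epsilon> \<le> \<eta> x \<and> \<eta> x \<le> 1 - \<epsilon>} > 0"
    and "mono l"
    and "convex_on UNIV l"
    and "\<forall>z. l z \<ge> 0"
    and "\<forall>M>0. \<exists>z0. \<forall>z\<ge>z0. \<forall>g\<in>subdiff l z. g \<ge> M"
  shows "((\<lambda>lam. Inf {reg_risk P l ip lam f \<rho> | f \<rho>. f \<in> H})
           \<longlongrightarrow> Inf {risk P l f \<rho> | f \<rho>. f \<in> borel_measurable borel}) at_top"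
proof -
  note R = assms(4)
  note F = rkhs_facts[OF R]
  define Rs where "Rs = Inf {risk P l f \<rho> | f \<rho>. f \<in> borel_measurable borel}"
  define SH where "SH = Inf {risk P l f \<rho> | f \<rho>. f \<in> H}"
  define S where "S = (\<lambda>lam. Inf {reg_risk P l ip lam f \<rho> | f \<rho>. f \<in> H})"
  have Hm: "h \<in> borel_measurable borel" if "h \<in> H" for h
    using rkhs_cont[OF R assms(3) that] by (rule borel_measurable_continuous_onI)
  have le1: "Rs \<le> SH" unfolding SH_def
  proof (rule Inf_greatest)
    fix x assume "x \<in> {risk P l f \<rho> | f \<rho>. f \<in> H}"
    then obtain h \<rho> where x: "x = risk P l h \<rho>" and h: "h \<in> H" by auto
    show "Rs \<le> x" unfolding Rs_def x by (rule Inf_lower) (use Hm[OF h] in auto)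
  qed
  have le2: "SH \<le> Rs" unfolding Rs_def
  proof (rule Inf_greatest)
    fix x assume "x \<in> {risk P l f \<rho> | f \<rho>. f \<in> borel_measurable borel}"
    then obtain f \<rho> where x: "x = risk P l f \<rho>" and f: "f \<in> borel_measurable borel" by auto
    show "SH \<le> x" unfolding x
    proof (rule ereal_le_epsilon2)
      fix e :: real assume e: "e > 0"
      obtain h where h: "h \<in> H" and hi: "(\<integral>\<^sup>+z. ennreal (l (\<rho> - lab (snd z) * h (fst z))) \<partial>P)
            \<le> (\<integral>\<^sup>+z. ennreal (l (\<rho> - lab (snd z) * f (fst z))) \<partial>P) + ennreal e"
        using approx_risk[OF assms(7) assms(8) assms(5) assms(13) assms(14) _ f e, of \<rho>] assms(15) by blast
      have "SH \<le> risk P l h \<rho>" unfolding SH_def by (rule Inf_lower) (use h in auto)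
      also have "risk P l h \<rho> \<le> risk P l f \<rho> + ereal e"
      proof -
        have "enn2ereal (\<integral>\<^sup>+z. ennreal (l (\<rho> - lab (snd z) * h (fst z))) \<partial>P)
            \<le> enn2ereal ((\<integral>\<^sup>+z. ennreal (l (\<rho> - lab (snd z) * f (fst z))) \<partial>P) + ennreal e)"
          using hi by (simp add: less_eq_ennreal.rep_eq)
        also have "\<dots> = enn2ereal (\<integral>\<^sup>+z. ennreal (l (\<rho> - lab (snd z) * f (fst z))) \<partial>P) + ereal e"
          using e by (simp add: plus_ennreal.rep_eq)
        finally show ?thesis unfolding risk_def by (simp add: add.assoc add_left_mono)
      qed
      finally show "SH \<le> risk P l f \<rho> + ereal e" .
    qed
  qed
  have SHS: "SH \<le> S lam" for lam unfolding S_def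
  proof (rule Inf_greatest)
    fix x assume "x \<in> {reg_risk P l ip lam f \<rho> | f \<rho>. f \<in> H}"
    then obtain h \<rho> where x: "x = reg_risk P l ip lam h \<rho>" and h: "h \<in> H" by auto
    have "SH \<le> risk P l h \<rho>" unfolding SH_def by (rule Inf_lower) (use h in auto)
    also have "\<dots> \<le> reg_risk P l ip lam h \<rho>" unfolding reg_risk_def
      by (rule add_increasing2) (auto simp: theta_def)
    finally show "SH \<le> x" unfolding x .
  qed
  have eq: "SH = Rs" using le1 le2 by simp
  have "(S \<longlongrightarrow> Rs) at_top"
  proof (rule order_tendstoI)
    fix a assume "a < Rs"
    then show "\<forall>\<^sub>F lam in at_top. a < S lam"
      using SHS eq by (intro always_eventually allI) (metis less_le_trans)
  next
    fix b assume "Rs < b"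
    then have "SH < b" using eq by simp
    then obtain x where "x \<in> {risk P l f \<rho> | f \<rho>. f \<in> H}" "x < b"
      unfolding SH_def using Inf_less_iff by blast
    then obtain h \<rho> where hb: "risk P l h \<rho> < b" and h: "h \<in> H" by auto
    show "\<forall>\<^sub>F lam in at_top. S lam < b"
    proof (rule eventually_at_top_linorderI[of "sqrt (ip h h)"])
      fix lam assume lam: "lam \<ge> sqrt (ip h h)"
      have ipn: "ip h h \<ge> 0" using F(6)[OF h] .
      have "ip h h = (sqrt (ip h h))^2" using ipn by simp
      also have "\<dots> \<le> lam^2" using lam ipn by (intro power_mono) auto
      finally have "ip h h \<le> lam^2" .
      then have "reg_risk P l ip lam h \<rho> = risk P l h \<rho>" unfolding reg_risk_def theta_def by simp
      moreover have "S lam \<le> reg_risk P l ip lam h \<rho>" unfolding S_def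
        by (rule Inf_lower) (use h in auto)
      ultimately show "S lam < b" using hb by simp
    qed
  qed
  then show ?thesis unfolding S_def Rs_def .
qed

end
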